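(* A uniformly random string over an alphabet of size $O(\varepsilon^{-3})$ satisfies the $\varepsilon$-self-matching property with constant probability.
   Context: A monotone matching between a string $S$ and itself is a set of pairs $(a_1,b_1),\dots,(a_m,b_m)$ with $a_1<\dots<a_m$, $b_1<\dots<b_m$ and $S[a_i]=S[b_i]$; a pair is bad if $a_i\ne b_i$. $S$ satisfies the $\varepsilon$-self-matching property if every monotone matching between $S$ and itself contains fewer than $\varepsilon|S|$ bad pairs. "Constant probability" means a probability bounded below by a positive constant independent of the string length. *)

theory Defs
  imports Main Complex_Main
begin

definition monotone_self_matching :: "'a list \<Rightarrow> (nat \<times> nat) list \<Rightarrow> bool" where
  "monotone_self_matching S M \<longleftrightarrow>
     sorted_wrt (<) (map fst M) \<and> sorted_wrt (<) (map snd M) \<and>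
     (\<forall>(a, b) \<in> set M. a < length S \<and> b < length S \<and> S ! a = S ! b)"

definition bad_pairs :: "(nat \<times> nat) list \<Rightarrow> nat" where
  "bad_pairs M = length (filter (\<lambda>(a, b). a \<noteq> b) M)"

definition self_matching_property :: "real \<Rightarrow> 'a list \<Rightarrow> bool" where
  "self_matching_property \<epsilon> S \<longleftrightarrow>
     (\<forall>M. monotone_self_matching S M \<longrightarrow> real (bad_pairs M) < \<epsilon> * real (length S))"

definition strings_over :: "nat \<Rightarrow> nat \<Rightarrow> nat list set" where
  "strings_over k n = {S. length S = n \<and> set S \<subseteq> {..<k}}"

end

theory Submission imports Defs begin

lemma strings_over_alt: "strings_over k n = {xs. set xs \<subseteq> {..<k} \<and> length xs = n}"
  unfolding strings_over_def by auto

lemma finite_strings_over: "finite (strings_over k n)"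
  unfolding strings_over_alt by (rule finite_lists_length_eq) simp

lemma card_strings_over: "card (strings_over k n) = k ^ n"
  unfolding strings_over_alt by (simp add: card_lists_length_eq)

lemma count_R:
  assumes "finite R" "\<forall>(a,b)\<in>R. a < b \<and> b < n" "inj_on snd R"
  shows "card {S\<in>strings_over k n. \<forall>(a,b)\<in>R. S!a = S!b} \<le> k ^ (n - card R)"
  using assms
proof (induction n arbitrary: R)
  case 0
  then have "R = {}" by auto
  have "{S\<in>strings_over k 0. \<forall>(a,b)\<in>R. S!a = S!b} \<subseteq> {[]}"
    by (auto simp: strings_over_def)
  note sub0 = this
  have "card {S\<in>strings_over k 0. \<forall>(a,b)\<in>R. S!a = S!b} \<le> 1"
    using card_mono[OF _ sub0] by simp
  then show ?case using \<open>R = {}\<close> by simp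
next
  case (Suc n)
  let ?G = "\<lambda>n R. {S\<in>strings_over k n. \<forall>(a,b)\<in>R. S!a = S!b}"
  show ?case
  proof (cases "\<exists>a. (a, n) \<in> R")
    case True
    then obtain a where an: "(a,n) \<in> R" by blast
    define R' where "R' = R - {(a,n)}"
    have R'b: "\<forall>(a',b)\<in>R'. a' < b \<and> b < n"
    proof (intro ballI, clarify)
      fix a' b assume "(a',b) \<in> R'"
      then have "(a',b) \<in> R" "(a',b) \<noteq> (a,n)" by (auto simp: R'_def)
      moreover have "b \<noteq> n"
      proof
        assume "b = n"
        with \<open>(a',b) \<in> R\<close> an Suc.prems(3) have "(a',b) = (a,n)"
          by (metis inj_on_def snd_conv)
        with \<open>(a',b) \<noteq> (a,n)\<close> show False by simp
      qed
      ultimately show "a' < b \<and> b < n" using Suc.prems(2) by fastforce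
    qed
    have an': "a < n" using an Suc.prems(2) by auto
    have IH: "card (?G n R') \<le> k ^ (n - card R')"
      apply (rule Suc.IH) using Suc.prems R'b by (auto simp: R'_def intro: inj_on_subset)
    have sub: "?G (Suc n) R \<subseteq> (\<lambda>S. S @ [S!a]) ` ?G n R'"
    proof
      fix S' assume S': "S' \<in> ?G (Suc n) R"
      then have "length S' = Suc n" by (simp add: strings_over_def)
      then obtain S x where Sx: "S' = S @ [x]" "length S = n"
        by (metis length_Suc_conv_rev)
      have "x = S ! a" using S' an an' Sx by (auto simp: nth_append)
      moreover have "S \<in> ?G n R'"
      proof -
        have "S \<in> strings_over k n" using S' Sx by (auto simp: strings_over_def)
        moreover have "\<forall>(a',b)\<in>R'. S!a' = S!b"
        proof (intro ballI, clarify)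
          fix a' b assume ab: "(a',b) \<in> R'"
          then have "(a',b) \<in> R" by (auto simp: R'_def)
          then have "S'!a' = S'!b" using S' by auto
          then show "S!a' = S!b" using R'b ab Sx by (auto simp: nth_append)
        qed
        ultimately show ?thesis by simp
      qed
      ultimately show "S' \<in> (\<lambda>S. S @ [S!a]) ` ?G n R'" using Sx by blast
    qed
    have fin: "finite (?G n R')" using finite_strings_over by simp
    have "card (?G (Suc n) R) \<le> card (?G n R')"
      by (rule order.trans[OF card_mono[OF _ sub] card_image_le]) (use fin in auto)
    moreover have "card R' = card R - 1" "card R \<ge> 1"
      using an Suc.prems(1) by (auto simp: R'_def card_Diff_singleton Suc_le_eq card_gt_0_iff)
    moreover have "n - card R' = Suc n - card R" using \<open>card R' = card R - 1\<close> \<open>card R \<ge> 1\<close> by simp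
    ultimately show ?thesis using IH by simp
  next
    case False
    have Rb: "\<forall>(a,b)\<in>R. a < b \<and> b < n"
      using Suc.prems(2) False by (fastforce simp: less_Suc_eq)
    have IH: "card (?G n R) \<le> k ^ (n - card R)"
      using Suc.IH Suc.prems Rb by blast
    have sub: "?G (Suc n) R \<subseteq> (\<lambda>(S,x). S @ [x]) ` (?G n R \<times> {..<k})"
    proof
      fix S' assume S': "S' \<in> ?G (Suc n) R"
      then have "length S' = Suc n" by (simp add: strings_over_def)
      then obtain S x where Sx: "S' = S @ [x]" "length S = n"
        by (metis length_Suc_conv_rev)
      have "x < k" using S' Sx by (auto simp: strings_over_def)
      moreover have "S \<in> ?G n R"
      proof -
        have "S \<in> strings_over k n" using S' Sx by (auto simp: strings_over_def)
        moreover have "\<forall>(a',b)\<in>R. S!a' = S!b"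
        proof (intro ballI, clarify)
          fix a' b assume ab: "(a',b) \<in> R"
          then have "S'!a' = S'!b" using S' by auto
          then show "S!a' = S!b" using Rb ab Sx by (auto simp: nth_append)
        qed
        ultimately show ?thesis by simp
      qed
      ultimately show "S' \<in> (\<lambda>(S,x). S @ [x]) ` (?G n R \<times> {..<k})" using Sx by force
    qed
    have fin: "finite (?G n R \<times> {..<k})" using finite_strings_over by simp
    have "card (?G (Suc n) R) \<le> card (?G n R \<times> {..<k})"
      by (rule order.trans[OF card_mono[OF _ sub] card_image_le]) (use fin in auto)
    also have "\<dots> = card (?G n R) * k" by (simp add: card_cartesian_product)
    also have "\<dots> \<le> k ^ (n - card R) * k" using IH by simp
    also have "card R \<le> n"
    proof -
      have "card R = card (snd ` R)" using Suc.prems(3) by (simp add: card_image)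
      also have "\<dots> \<le> card {..<n}" by (rule card_mono) (use Rb in auto)
      finally show ?thesis by simp
    qed
    then have "k ^ (n - card R) * k = k ^ (Suc n - card R)"
      by (simp add: Suc_diff_le)
    finally show ?thesis .
  qed
qed

lemma length_filter_split:
  "length (filter (\<lambda>(a,b). a \<noteq> b) M) =
     length (filter (\<lambda>(a,b). a < (b::nat)) M) + length (filter (\<lambda>(a,b). b < a) M)"
  by (induction M) auto

lemma sorted_wrt_map_filter:
  "sorted_wrt R (map f xs) \<Longrightarrow> sorted_wrt R (map f (filter P xs))"
  by (simp add: sorted_wrt_map sorted_wrt_filter)

definition Qset :: "nat \<Rightarrow> nat \<Rightarrow> (nat \<times> nat) list set" where
  "Qset n t = {P. length P = t \<and> sorted_wrt (<) (map fst P) \<and> sorted_wrt (<) (map snd P) \<and>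
      (\<forall>(a,b)\<in>set P. a < b \<and> b < n)}"

lemma extract_P:
  fixes S :: "nat list"
  assumes "monotone_self_matching S M" "2 * t \<le> bad_pairs M + 1"
  shows "\<exists>P\<in>Qset (length S) t. \<forall>(a,b)\<in>set P. S!a = S!b"
proof -
  define M1 where "M1 = filter (\<lambda>(a,b). a < b) M"
  define M2 where "M2 = filter (\<lambda>(a,b). b < a) M"
  have len: "length M1 + length M2 = bad_pairs M"
    unfolding M1_def M2_def bad_pairs_def using length_filter_split by simp
  have mon: "sorted_wrt (<) (map fst M)" "sorted_wrt (<) (map snd M)"
    "\<forall>(a,b)\<in>set M. a < length S \<and> b < length S \<and> S!a = S!b"
    using assms(1) unfolding monotone_self_matching_def by auto
  have "t \<le> length M1 \<or> t \<le> length M2" using len assms(2) by linarith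
  then show ?thesis
  proof
    assume t: "t \<le> length M1"
    define P where "P = take t M1"
    have mf: "map fst P = take t (map fst M1)" "map snd P = take t (map snd M1)"
      by (simp_all add: P_def take_map)
    have s1: "sorted_wrt (<) (map fst P)" unfolding mf M1_def
      by (rule sorted_wrt_take, rule sorted_wrt_map_filter, rule mon(1))
    have s2: "sorted_wrt (<) (map snd P)" unfolding mf M1_def
      by (rule sorted_wrt_take, rule sorted_wrt_map_filter, rule mon(2))
    have s3: "\<forall>(a,b)\<in>set P. a < b \<and> b < length S"
    proof (intro ballI, clarify)
      fix a b assume "(a,b) \<in> set P"
      then have "(a,b) \<in> set M1" by (auto simp: P_def dest!: in_set_takeD)
      then have "(a,b) \<in> set M" "a < b" by (auto simp: M1_def)
      then show "a < b \<and> b < length S" using mon(3) by auto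
    qed
    have "length P = t" using t by (simp add: P_def)
    then have "P \<in> Qset (length S) t" using s1 s2 s3 by (simp add: Qset_def)
    moreover have "\<forall>(a,b)\<in>set P. S!a = S!b"
      using mon(3) by (auto simp: P_def M1_def dest!: in_set_takeD)
    ultimately show ?thesis by blast
  next
    assume t: "t \<le> length M2"
    define P where "P = map prod.swap (take t M2)"
    have mf: "map fst P = take t (map snd M2)" "map snd P = take t (map fst M2)"
      by (simp_all add: P_def take_map)
    have s1: "sorted_wrt (<) (map fst P)" unfolding mf M2_def
      by (rule sorted_wrt_take, rule sorted_wrt_map_filter, rule mon(2))
    have s2: "sorted_wrt (<) (map snd P)" unfolding mf M2_def
      by (rule sorted_wrt_take, rule sorted_wrt_map_filter, rule mon(1))
    have s3: "\<forall>(a,b)\<in>set P. a < b \<and> b < length S"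
    proof (intro ballI, clarify)
      fix a b assume "(a,b) \<in> set P"
      then have "(b,a) \<in> set M2" by (auto simp: P_def dest!: in_set_takeD)
      then have "(b,a) \<in> set M" "a < b" by (auto simp: M2_def)
      then show "a < b \<and> b < length S" using mon(3) by auto
    qed
    have "length P = t" using t by (simp add: P_def)
    then have "P \<in> Qset (length S) t" using s1 s2 s3 by (simp add: Qset_def)
    moreover have "\<forall>(a,b)\<in>set P. S!a = S!b"
      using mon(3) by (fastforce simp: P_def M2_def dest!: in_set_takeD)
    ultimately show ?thesis by blast
  qed
qed

lemma card_Qset: "card (Qset n t) \<le> (n choose t)^2" "finite (Qset n t)"
proof -
  define X where "X = {A. A \<subseteq> {..<n} \<and> card A = t}"
  define g where "g = (\<lambda>P::(nat\<times>nat) list. (set (map fst P), set (map snd P)))"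
  have inj: "inj_on g (Qset n t)"
  proof (rule inj_onI)
    fix P1 P2 assume P: "P1 \<in> Qset n t" "P2 \<in> Qset n t" "g P1 = g P2"
    have "map fst P1 = map fst P2"
      apply (rule sorted_distinct_set_unique)
      using P by (auto simp: Qset_def g_def strict_sorted_iff)
    moreover have "map snd P1 = map snd P2"
      apply (rule sorted_distinct_set_unique)
      using P by (auto simp: Qset_def g_def strict_sorted_iff)
    ultimately show "P1 = P2" by (metis zip_map_fst_snd)
  qed
  have img: "g ` Qset n t \<subseteq> X \<times> X"
  proof
    fix y assume "y \<in> g ` Qset n t"
    then obtain P where P: "P \<in> Qset n t" "y = g P" by blast
    have d: "distinct (map fst P)" "distinct (map snd P)"
      using P by (auto simp: Qset_def strict_sorted_iff)
    have "set (map fst P) \<subseteq> {..<n}" "set (map snd P) \<subseteq> {..<n}"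
      using P(1) by (fastforce simp: Qset_def)+
    moreover have "card (set (map fst P)) = t" "card (set (map snd P)) = t"
      using d P(1) by (auto simp: distinct_card Qset_def simp del: set_map)
    ultimately show "y \<in> X \<times> X" using P by (simp add: g_def X_def del: set_map)
  qed
  have finX: "finite (X \<times> X)" unfolding X_def by auto
  show "finite (Qset n t)"
    using finite_imageD[OF finite_subset[OF img finX] inj] .
  have "card (Qset n t) \<le> card (X \<times> X)" by (rule card_inj_on_le[OF inj img finX])
  also have "\<dots> = (n choose t)^2"
    by (simp add: card_cartesian_product X_def n_subsets power2_eq_square)
  finally show "card (Qset n t) \<le> (n choose t)^2" .
qed

lemma card_good_P:
  assumes "P \<in> Qset n t"
  shows "card {S\<in>strings_over k n. \<forall>(a,b)\<in>set P. S!a = S!b} \<le> k ^ (n - t)"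
proof -
  have d: "distinct P" "inj_on snd (set P)"
    using assms by (auto simp: Qset_def strict_sorted_iff distinct_map)
  have "card (set P) = t" using d assms by (simp add: distinct_card Qset_def)
  then show ?thesis using count_R[of "set P" n k] d assms by (auto simp: Qset_def)
qed

lemma pow_le_fact: "real t ^ t \<le> 3 ^ t * fact t"
proof (induction t)
  case 0 then show ?case by simp
next
  case (Suc t)
  have "(real t + 1) ^ t \<le> 3 * real t ^ t"
  proof (cases "t = 0")
    case True then show ?thesis by simp
  next
    case False
    have "(1 + 1 / real t) ^ t \<le> exp 1"
      by (rule exp_ge_one_plus_x_over_n_power_n) (use False in auto)
    also have "\<dots> \<le> 3" by (rule exp_le)
    finally have "(1 + 1 / real t) ^ t \<le> 3" .
    moreover have "(real t + 1) ^ t = real t ^ t * (1 + 1 / real t) ^ t"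
      using False by (simp add: power_mult_distrib[symmetric] field_simps)
    ultimately show ?thesis
      by (metis mult.commute mult_left_mono zero_le_power of_nat_0_le_iff)
  qed
  then have "real (Suc t) ^ Suc t \<le> (real t + 1) * (3 * real t ^ t)"
  proof -
    have "real (Suc t) ^ Suc t = (real t + 1) * (real t + 1) ^ t" by (simp add: add.commute)
    also have "\<dots> \<le> (real t + 1) * (3 * real t ^ t)"
      by (rule mult_left_mono[OF \<open>(real t + 1) ^ t \<le> 3 * real t ^ t\<close>]) simp
    finally show ?thesis .
  qed
  also have "\<dots> \<le> (real t + 1) * (3 * (3 ^ t * fact t))"
    using Suc.IH by (simp add: mult_left_mono)
  also have "\<dots> = 3 ^ Suc t * fact (Suc t)" by (simp add: algebra_simps)
  finally show ?case .
qed

lemma binom_le: "real (n choose t) * fact t \<le> real n ^ t"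
proof (cases "t \<le> n")
  case True
  have e: "(fact n :: nat) = (fact t * (n choose t)) * fact (n - t)"
    using binomial_fact_lemma[OF True] by (simp add: ac_simps)
  have "fact t * (n choose t) = (fact n :: nat) div fact (n - t)"
    unfolding e by simp
  also have "\<dots> \<le> n ^ t" by (rule fact_div_fact_le_pow[OF True])
  finally have "fact t * (n choose t) \<le> n ^ t" .
  then have "real (fact t * (n choose t)) \<le> real (n ^ t)" by linarith
  then show ?thesis by (simp add: mult.commute)
next
  case False then show ?thesis by (simp add: binomial_eq_0)
qed

lemma binom_bound:
  fixes \<epsilon> :: real
  assumes "0 < \<epsilon>" "1 \<le> t" "\<epsilon> * real n / 2 \<le> real t"
  shows "real (n choose t) \<le> (6 / \<epsilon>) ^ t"
proof -
  have tp: "real t > 0" using assms(2) by simp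
  have "real (n choose t) * fact t \<le> real n ^ t" by (rule binom_le)
  moreover have "real t ^ t \<le> 3 ^ t * fact t" by (rule pow_le_fact)
  ultimately have "real (n choose t) * real t ^ t \<le> real n ^ t * 3 ^ t"
  proof -
    assume a: "real (n choose t) * fact t \<le> real n ^ t" and b: "real t ^ t \<le> 3 ^ t * fact t"
    have "real (n choose t) * real t ^ t \<le> real (n choose t) * (3 ^ t * fact t)"
      using b by (rule mult_left_mono) simp
    also have "\<dots> = (real (n choose t) * fact t) * 3 ^ t" by simp
    also have "\<dots> \<le> real n ^ t * 3 ^ t" using a by (rule mult_right_mono) simp
    finally show ?thesis .
  qed
  then have "real (n choose t) \<le> (3 * real n / real t) ^ t"
    using tp by (simp add: power_divide power_mult_distrib field_simps)
  also have "\<dots> \<le> (6 / \<epsilon>) ^ t"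
  proof (rule power_mono)
    show "3 * real n / real t \<le> 6 / \<epsilon>"
      using assms tp by (simp add: field_simps)
    show "0 \<le> 3 * real n / real t" by simp
  qed
  finally show ?thesis .
qed

theorem theorem35:
  shows "\<exists>C > 0. \<exists>p > 0. \<forall>\<epsilon> n. 0 < \<epsilon> \<and> \<epsilon> < 1 \<and> n \<ge> 1 \<longrightarrow>
     (let k = nat \<lceil>C / \<epsilon> ^ 3\<rceil> in
        real (card {S \<in> strings_over k n. self_matching_property \<epsilon> S})
          / real (card (strings_over k n)) \<ge> p)"
proof (rule exI[where x=72], rule conjI, simp, rule exI[where x="1/2"], rule conjI, simp, intro allI impI)
  fix \<epsilon> :: real and n :: nat
  assume as: "0 < \<epsilon> \<and> \<epsilon> < 1 \<and> n \<ge> 1"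
  then have e0: "0 < \<epsilon>" and e1: "\<epsilon> < 1" and n1: "n \<ge> 1" by auto
  define k where "k = nat \<lceil>72 / \<epsilon> ^ 3\<rceil>"
  define t where "t = nat \<lceil>\<epsilon> * real n / 2\<rceil>"
  have "\<epsilon> ^ 3 \<le> \<epsilon> ^ 2" using e0 e1 by (simp add: power_decreasing)
  then have "72 / \<epsilon> ^ 2 \<le> 72 / \<epsilon> ^ 3" using e0 by (simp add: frac_le)
  also have "\<dots> \<le> real k" unfolding k_def by linarith
  finally have kr: "72 / \<epsilon> ^ 2 \<le> real k" .
  have k1: "k \<ge> 1"
  proof -
    have "\<epsilon> ^ 2 \<le> 1" using e0 e1 by (simp add: power_le_one)
    then have "72 / \<epsilon> ^ 2 \<ge> 1" using e0 by (simp add: field_simps)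
    then show ?thesis using kr by linarith
  qed
  have enp: "\<epsilon> * real n > 0" using e0 n1 by simp
  have t1: "1 \<le> t" unfolding t_def using enp by linarith
  have tr: "\<epsilon> * real n / 2 \<le> real t" unfolding t_def by linarith
  have tr2: "real t < \<epsilon> * real n / 2 + 1" unfolding t_def using enp by linarith
  have tn: "t \<le> n"
  proof -
    have "\<epsilon> * real n \<le> 1 * real n" using e1 by (intro mult_right_mono) auto
    then have "\<epsilon> * real n / 2 \<le> real n" by simp
    then show ?thesis unfolding t_def by linarith
  qed
  define G where "G = (\<lambda>P::(nat\<times>nat) list. {S\<in>strings_over k n. \<forall>(a,b)\<in>set P. S!a = S!b})"
  define B where "B = {S \<in> strings_over k n. \<not> self_matching_property \<epsilon> S}"
  define Gd where "Gd = {S \<in> strings_over k n. self_matching_property \<epsilon> S}"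
  have BU: "B \<subseteq> (\<Union>P\<in>Qset n t. G P)"
  proof
    fix S assume "S \<in> B"
    then have S: "S \<in> strings_over k n" "\<not> self_matching_property \<epsilon> S" by (auto simp: B_def)
    then obtain M where M: "monotone_self_matching S M" "\<epsilon> * real (length S) \<le> real (bad_pairs M)"
      unfolding self_matching_property_def by (auto simp: not_less)
    have lS: "length S = n" using S by (simp add: strings_over_def)
    have "real (2 * t) < real (bad_pairs M + 2)" using M(2) tr2 lS by simp
    then have "2 * t \<le> bad_pairs M + 1" by linarith
    then obtain P where "P \<in> Qset n t" "\<forall>(a,b)\<in>set P. S!a = S!b"
      using extract_P[OF M(1)] lS by blast
    then show "S \<in> (\<Union>P\<in>Qset n t. G P)" using S by (auto simp: G_def)
  qed
  have cB: "card B \<le> (n choose t)^2 * k ^ (n - t)"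
  proof -
    have "card B \<le> card (\<Union>P\<in>Qset n t. G P)"
      by (rule card_mono[OF _ BU]) (use finite_strings_over card_Qset(2) in \<open>auto simp: G_def\<close>)
    also have "\<dots> \<le> (\<Sum>P\<in>Qset n t. card (G P))" by (rule card_UN_le[OF card_Qset(2)])
    also have "\<dots> \<le> (\<Sum>P\<in>Qset n t. k ^ (n - t))"
      by (rule sum_mono) (simp add: G_def card_good_P)
    also have "\<dots> = card (Qset n t) * k ^ (n - t)" by simp
    also have "\<dots> \<le> (n choose t)^2 * k ^ (n - t)" using card_Qset(1) by (simp add: mult_right_mono)
    finally show ?thesis .
  qed
  have real_bound: "2 * real ((n choose t)^2) \<le> real k ^ t"
  proof -
    have c: "real (n choose t) \<le> (6 / \<epsilon>) ^ t" using binom_bound[OF e0 t1 tr] .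
    have "2 * real ((n choose t)^2) \<le> 2 * ((6 / \<epsilon>) ^ t)^2"
      using c by (simp add: power_mono)
    also have "\<dots> = 2 * ((6 / \<epsilon>)^2) ^ t"
      by (simp add: power_mult[symmetric] mult.commute)
    also have "\<dots> = 2 * (36 / \<epsilon>^2) ^ t"
      by (simp add: power_divide)
    also have "\<dots> \<le> 2 ^ t * (36 / \<epsilon>^2) ^ t"
    proof -
      have "(2::real) \<le> 2 ^ t" using t1 by (metis power_one_right power_increasing one_le_numeral)
      then show ?thesis by (rule mult_right_mono) simp
    qed
    also have "\<dots> = (72 / \<epsilon>^2) ^ t" by (simp add: power_mult_distrib[symmetric])
    also have "\<dots> \<le> real k ^ t" using kr e0 by (simp add: power_mono)
    finally show ?thesis .
  qed
  have cBr: "2 * real (card B) \<le> real k ^ n"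
  proof -
    have "2 * real (card B) \<le> 2 * (real ((n choose t)^2) * real k ^ (n - t))"
      using cB by (metis of_nat_le_iff of_nat_mult of_nat_power mult_left_mono zero_le_numeral)
    also have "\<dots> = (2 * real ((n choose t)^2)) * real k ^ (n - t)" by simp
    also have "\<dots> \<le> real k ^ t * real k ^ (n - t)"
      using real_bound by (rule mult_right_mono) simp
    also have "\<dots> = real k ^ n" using tn by (simp add: power_add[symmetric])
    finally show ?thesis .
  qed
  have split: "card Gd + card B = k ^ n"
  proof -
    have "Gd \<union> B = strings_over k n" "Gd \<inter> B = {}" by (auto simp: Gd_def B_def)
    then have "card Gd + card B = card (strings_over k n)"
      using finite_strings_over by (metis card_Un_disjoint finite_Un)
    then show ?thesis by (simp add: card_strings_over)
  qed
  have kpos: "real k ^ n > 0" using k1 by simp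
  have "1/2 \<le> real (card Gd) / real k ^ n"
  proof -
    have "real (card Gd) + real (card B) = real k ^ n" using split by (metis of_nat_add of_nat_power)
    then have "real k ^ n \<le> 2 * real (card Gd)" using cBr by linarith
    then show ?thesis using kpos by (simp add: field_simps)
  qed
  then show "let k = nat \<lceil>72 / \<epsilon> ^ 3\<rceil> in
        1/2 \<le> real (card {S \<in> strings_over k n. self_matching_property \<epsilon> S})
          / real (card (strings_over k n))"
    by (simp add: Let_def k_def[symmetric] Gd_def card_strings_over)
qed

end
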